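(* Let $\mathcal{X}$ be a finite source alphabet and $\mathcal{Y}$ a finite reproduction alphabet with $|\mathcal{X}|\geq 2$ and $|\mathcal{Y}|\geq 2$, and let $d:\mathcal{X}\times\mathcal{Y}\to\mathbb{R}_{\geq0}$ be a normal distortion measure. Assume there exists at least one source distribution $P_X$ on $\mathcal{X}$ such that the rate distortion function $R(D)$ is not identically zero. Then there exist two distinct source letters $k_1,k_2\in\mathcal{X}$ and two distinct reproduction letters $l_1,l_2\in\mathcal{Y}$ such that $d(k_1,l_1)=0$, $d(k_1,l_2)>0$, $d(k_2,l_2)=0$ and $d(k_2,l_1)>0$.
   Context: A distortion measure $d:\mathcal{X}\times\mathcal{Y}\to\mathbb{R}_{\geq 0}$ is normal if for every $x\in\mathcal{X}$ there is $y\in\mathcal{Y}$ with $d(x,y)=0$. For a source distribution $P_X$ and distortion level $D\geq 0$, the rate distortion function is $R(D)=\inf\{I(X;Y): P_{Y|X},\ \sum_{x,y}P_X(x)P_{Y|X}(y|x)d(x,y)\leq D\}$, the infimum over all transition matrices $P_{Y|X}$, with $I(X;Y)$ the mutual information of $P_XP_{Y|X}$. *)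

theory Defs
  imports Complex_Main
begin

text \<open>Finite alphabets are modelled by finite types 'x (source) and 'y (reproduction).
  Logarithms are natural; the base is immaterial for the statement.\<close>

definition is_distribution :: "('a::finite \<Rightarrow> real) \<Rightarrow> bool" where
  "is_distribution P \<longleftrightarrow> (\<forall>a. P a \<ge> 0) \<and> (\<Sum>a\<in>UNIV. P a) = 1"

definition is_channel :: "('x::finite \<Rightarrow> 'y::finite \<Rightarrow> real) \<Rightarrow> bool" where
  "is_channel W \<longleftrightarrow> (\<forall>x. is_distribution (W x))"

definition output_dist :: "('x::finite \<Rightarrow> real) \<Rightarrow> ('x \<Rightarrow> 'y::finite \<Rightarrow> real) \<Rightarrow> 'y \<Rightarrow> real" where
  "output_dist P W y = (\<Sum>x\<in>UNIV. P x * W x y)"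

definition mutual_info :: "('x::finite \<Rightarrow> real) \<Rightarrow> ('x \<Rightarrow> 'y::finite \<Rightarrow> real) \<Rightarrow> real" where
  "mutual_info P W = (\<Sum>x\<in>UNIV. \<Sum>y\<in>UNIV.
     (if P x * W x y = 0 then 0 else P x * W x y * ln (W x y / output_dist P W y)))"

definition avg_distortion :: "('x::finite \<Rightarrow> real) \<Rightarrow> ('x \<Rightarrow> 'y::finite \<Rightarrow> real) \<Rightarrow> ('x \<Rightarrow> 'y \<Rightarrow> real) \<Rightarrow> real" where
  "avg_distortion P W d = (\<Sum>x\<in>UNIV. \<Sum>y\<in>UNIV. P x * W x y * d x y)"

definition rate_distortion :: "('x::finite \<Rightarrow> real) \<Rightarrow> ('x \<Rightarrow> 'y::finite \<Rightarrow> real) \<Rightarrow> real \<Rightarrow> real" where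
  "rate_distortion P d D =
     Inf {mutual_info P W | W. is_channel W \<and> avg_distortion P W d \<le> D}"

definition normal_distortion :: "('x \<Rightarrow> 'y \<Rightarrow> real) \<Rightarrow> bool" where
  "normal_distortion d \<longleftrightarrow> (\<forall>x. \<exists>y. d x y = 0)"

end

theory Submission
  imports Defs
begin

lemma mi_nonneg:
  fixes P :: "'x::finite \<Rightarrow> real" and W :: "'x \<Rightarrow> 'y::finite \<Rightarrow> real"
  assumes P: "is_distribution P" and W: "is_channel W"
  shows "mutual_info P W \<ge> 0"
proof -
  define q where "q = output_dist P W"
  have Pn: "\<And>x. P x \<ge> 0" and P1: "(\<Sum>x\<in>UNIV. P x) = 1" using P by (auto simp: is_distribution_def)
  have Wn: "\<And>x y. W x y \<ge> 0" and W1: "\<And>x. (\<Sum>y\<in>UNIV. W x y) = 1"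
    using W by (auto simp: is_channel_def is_distribution_def)
  have qge: "q y \<ge> P x * W x y" for x y
  proof -
    have "P x * W x y = (\<Sum>x'\<in>{x}. P x' * W x' y)" by simp
    also have "\<dots> \<le> (\<Sum>x'\<in>UNIV. P x' * W x' y)"
      by (rule sum_mono2) (auto intro: mult_nonneg_nonneg Pn Wn)
    finally show ?thesis by (simp add: q_def output_dist_def)
  qed
  have trm: "(if P x * W x y = 0 then 0 else P x * W x y * ln (W x y / q y)) \<ge> P x * W x y - P x * q y" for x y
  proof (cases "P x * W x y = 0")
    case True
    have "q y \<ge> 0" using qge[of x y] True by simp
    then have "P x * q y \<ge> 0" using Pn[of x] by simp
    then show ?thesis using True by (subst if_P[OF True]) linarith
  next
    case False
    have px: "P x > 0" using False Pn[of x] by (cases "P x = 0") auto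
    have wx: "W x y > 0" using False Wn[of x y] by (cases "W x y = 0") auto
    have "P x * W x y > 0" using px wx by simp
    then have qp: "q y > 0" using qge[of x y] by linarith
    have "ln (q y / W x y) \<le> q y / W x y - 1" using qp wx by (intro ln_le_minus_one) simp
    moreover have "ln (W x y / q y) = - ln (q y / W x y)" using qp wx by (simp add: ln_div)
    ultimately have "ln (W x y / q y) \<ge> 1 - q y / W x y" by simp
    hence "P x * W x y * ln (W x y / q y) \<ge> P x * W x y * (1 - q y / W x y)"
      using px wx by (intro mult_left_mono) auto
    also have "P x * W x y * (1 - q y / W x y) = P x * W x y - P x * q y"
      using wx by (simp add: field_simps)
    finally show ?thesis using False by simp
  qed
  have Q1: "(\<Sum>y\<in>UNIV. q y) = 1"
  proof -
    have "(\<Sum>y\<in>UNIV. q y) = (\<Sum>x\<in>UNIV. \<Sum>y\<in>UNIV. P x * W x y)"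
      unfolding q_def output_dist_def by (rule sum.swap)
    also have "\<dots> = (\<Sum>x\<in>UNIV. P x)"
      by (simp only: sum_distrib_left[symmetric] W1 mult_1_right)
    finally show ?thesis using P1 by simp
  qed
  have inner: "(\<Sum>y\<in>UNIV. P x * W x y - P x * q y) = 0" for x
  proof -
    have "(\<Sum>y\<in>UNIV. P x * W x y - P x * q y) = P x * (\<Sum>y\<in>UNIV. W x y) - P x * (\<Sum>y\<in>UNIV. q y)"
      by (simp only: sum_subtractf sum_distrib_left)
    then show ?thesis by (simp add: W1 Q1)
  qed
  have "mutual_info P W \<ge> (\<Sum>x\<in>UNIV. \<Sum>y\<in>UNIV. P x * W x y - P x * q y)"
    unfolding mutual_info_def q_def[symmetric] by (intro sum_mono trm)
  then show ?thesis by (simp add: inner)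
qed

theorem mainTheorem8:
  fixes d :: "'x::finite \<Rightarrow> 'y::finite \<Rightarrow> real"
  assumes "card (UNIV :: 'x set) \<ge> 2" and "card (UNIV :: 'y set) \<ge> 2"
    and "\<forall>x y. d x y \<ge> 0"
    and "normal_distortion d"
    and "\<exists>P. is_distribution P \<and> (\<exists>D\<ge>0. rate_distortion P d D \<noteq> 0)"
  shows "\<exists>k1 k2 l1 l2. k1 \<noteq> k2 \<and> l1 \<noteq> l2 \<and> d k1 l1 = 0 \<and> d k1 l2 > 0
           \<and> d k2 l2 = 0 \<and> d k2 l1 > 0"
proof (rule ccontr)
  assume neg: "\<not> ?thesis"
  define Z where "Z x = {y. d x y = 0}" for x
  have Zne: "Z x \<noteq> {}" for x using assms(4) by (auto simp: Z_def normal_distortion_def)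
  have chain: "Z a \<subseteq> Z b \<or> Z b \<subseteq> Z a" for a b
  proof (rule ccontr)
    assume "\<not> ?thesis"
    then obtain l1 l2 where "l1 \<in> Z a" "l1 \<notin> Z b" "l2 \<in> Z b" "l2 \<notin> Z a" by blast
    then have a1: "d a l1 = 0" and b1: "d b l1 > 0" and b2: "d b l2 = 0" and a2: "d a l2 > 0"
      using assms(3) by (auto simp: Z_def less_eq_real_def)
    have "a \<noteq> b" using a1 b1 by auto
    moreover have "l1 \<noteq> l2" using a1 a2 by auto
    ultimately show False using neg a1 a2 b1 b2 by blast
  qed
  have fin: "finite (range (\<lambda>x. card (Z x)))" by simp
  have "Min (range (\<lambda>x. card (Z x))) \<in> range (\<lambda>x. card (Z x))"
    using fin by (intro Min_in) auto
  then obtain x0 where x0eq: "card (Z x0) = Min (range (\<lambda>x. card (Z x)))"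
    by (metis (no_types, lifting) imageE)
  have x0: "card (Z x0) \<le> card (Z x)" for x
    unfolding x0eq using fin by (intro Min_le) auto
  obtain y0 where y0: "y0 \<in> Z x0" using Zne by blast
  have all0: "d x y0 = 0" for x
  proof -
    have "Z x0 \<subseteq> Z x"
    proof (cases "Z x0 \<subseteq> Z x")
      case False
      then have "Z x \<subseteq> Z x0" using chain by blast
      moreover have "card (Z x0) \<le> card (Z x)" by (rule x0)
      ultimately have "Z x = Z x0" by (metis card_seteq finite)
      then show ?thesis by simp
    qed simp
    then show ?thesis using y0 by (auto simp: Z_def)
  qed
  obtain P D where P: "is_distribution P" and D: "D \<ge> 0" and R: "rate_distortion P d D \<noteq> 0"
    using assms(5) by blast
  define W :: "'x \<Rightarrow> 'y \<Rightarrow> real" where "W x y = (if y = y0 then 1 else 0)" for x y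
  have Wc: "is_channel W" by (simp add: is_channel_def is_distribution_def W_def)
  have P1: "(\<Sum>x\<in>UNIV. P x) = 1" using P by (simp add: is_distribution_def)
  have od: "output_dist P W y0 = 1" by (simp add: output_dist_def W_def P1)
  have mi0: "mutual_info P W = 0"
  proof -
    have "(if P x * W x y = 0 then 0 else P x * W x y * ln (W x y / output_dist P W y)) = 0" for x y
    proof (cases "y = y0")
      case True
      then show ?thesis using od by (simp add: W_def)
    next
      case False
      then show ?thesis by (simp add: W_def)
    qed
    then show ?thesis unfolding mutual_info_def by simp
  qed
  have ad: "avg_distortion P W d = 0"
    unfolding avg_distortion_def by (intro sum.neutral ballI) (simp add: W_def all0)
  define S where "S = {mutual_info P W | W. is_channel W \<and> avg_distortion P W d \<le> D}"
  have "mutual_info P W \<in> S" unfolding S_def using Wc ad D by auto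
  then have h1: "0 \<in> S" by (simp add: mi0)
  have h2: "0 \<le> s" if sS: "s \<in> S" for s
  proof -
    obtain W' :: "'x \<Rightarrow> 'y \<Rightarrow> real" where "s = mutual_info P W'" "is_channel W'" using sS unfolding S_def by auto
    then show ?thesis using mi_nonneg[OF P] by simp
  qed
  have i0: "Inf S = 0" by (rule cInf_eq_minimum[OF h1 h2])
  have "rate_distortion P d D = Inf S" unfolding rate_distortion_def S_def by (rule refl)
  then show False using R i0 by argo
qed

end
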